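(* For every even integer $n\geq 4$ and every integer $m\geq 2$, the graph $mW_n$ (the disjoint union of $m$ copies of the wheel $W_n$) is $C_3$-supermagic.
   Context: All graphs are finite and simple. For a graph $H$, a graph $G=(V,E)$ has an $H$-covering if every edge of $G$ belongs to a subgraph of $G$ isomorphic to $H$. For such $G$, an $H$-magic labeling is a bijection $\lambda: V\cup E\to\{1,2,\dots,|V|+|E|\}$ for which there is a constant $c$ such that for every subgraph $H'=(V',E')$ of $G$ isomorphic to $H$, $\sum_{v\in V'}\lambda(v)+\sum_{e\in E'}\lambda(e)=c$. It is $H$-supermagic if moreover $\{\lambda(v):v\in V\}=\{1,\dots,|V|\}$; $G$ is $H$-supermagic if it admits such a labeling. $C_k$ is the cycle of length $k$. $mG$ denotes the disjoint union of $m$ copies of $G$. The wheel $W_n=K_1+C_n$ has vertices $c,v_1,\dots,v_n$ and edges $cv_i$ ($1\le i\le n$) and $v_iv_{i+1}$ ($1\le i\le n$, indices modulo $n$). *)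

theory Defs
  imports Main
begin

type_synonym 'a graph = "'a set \<times> 'a set set"

definition simple_graph :: "'a graph \<Rightarrow> bool" where
  "simple_graph G \<longleftrightarrow> finite (fst G) \<and>
     (\<forall>e\<in>snd G. \<exists>u v. u \<in> fst G \<and> v \<in> fst G \<and> u \<noteq> v \<and> e = {u, v})"

definition subgraph :: "'a graph \<Rightarrow> 'a graph \<Rightarrow> bool" where
  "subgraph G' G \<longleftrightarrow> fst G' \<subseteq> fst G \<and> snd G' \<subseteq> snd G \<and> (\<forall>e\<in>snd G'. e \<subseteq> fst G')"

definition graph_iso :: "'b graph \<Rightarrow> 'a graph \<Rightarrow> bool" where
  "graph_iso H G' \<longleftrightarrow> (\<exists>f. bij_betw f (fst H) (fst G') \<and>
      (\<forall>u\<in>fst H. \<forall>v\<in>fst H. {u, v} \<in> snd H \<longleftrightarrow> {f u, f v} \<in> snd G'))"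

definition H_subgraphs :: "'b graph \<Rightarrow> 'a graph \<Rightarrow> 'a graph set" where
  "H_subgraphs H G = {G'. subgraph G' G \<and> graph_iso H G'}"

definition H_covering :: "'b graph \<Rightarrow> 'a graph \<Rightarrow> bool" where
  "H_covering H G \<longleftrightarrow> (\<forall>e\<in>snd G. \<exists>G'\<in>H_subgraphs H G. e \<in> snd G')"

text \<open>A labeling of vertices and edges: Inl v for vertex v, Inr e for edge e.\<close>
definition weight :: "('a + 'a set \<Rightarrow> nat) \<Rightarrow> 'a graph \<Rightarrow> nat" where
  "weight lam G' = (\<Sum>v\<in>fst G'. lam (Inl v)) + (\<Sum>e\<in>snd G'. lam (Inr e))"

definition H_magic_labeling :: "'b graph \<Rightarrow> 'a graph \<Rightarrow> ('a + 'a set \<Rightarrow> nat) \<Rightarrow> bool" where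
  "H_magic_labeling H G lam \<longleftrightarrow>
     bij_betw lam (Inl ` fst G \<union> Inr ` snd G) {1 .. card (fst G) + card (snd G)} \<and>
     (\<exists>c. \<forall>G'\<in>H_subgraphs H G. weight lam G' = c)"

definition H_supermagic_labeling :: "'b graph \<Rightarrow> 'a graph \<Rightarrow> ('a + 'a set \<Rightarrow> nat) \<Rightarrow> bool" where
  "H_supermagic_labeling H G lam \<longleftrightarrow>
     H_magic_labeling H G lam \<and> lam ` Inl ` fst G = {1 .. card (fst G)}"

definition H_supermagic :: "'b graph \<Rightarrow> 'a graph \<Rightarrow> bool" where
  "H_supermagic H G \<longleftrightarrow> H_covering H G \<and> (\<exists>lam. H_supermagic_labeling H G lam)"

definition cycle_graph :: "nat \<Rightarrow> nat graph" where
  "cycle_graph k = ({..<k}, {{i, (i + 1) mod k} | i. i < k})"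

text \<open>m W_n: copy j < m has centre (j,0) and rim vertices (j,1),...,(j,n);
  edges (j,0)(j,i) and (j,i)(j,i mod n + 1) for 1 <= i <= n.\<close>
definition mWheel :: "nat \<Rightarrow> nat \<Rightarrow> (nat \<times> nat) graph" where
  "mWheel m n = ({(j, i). j < m \<and> i \<le> n},
     {{(j, 0), (j, i)} | j i. j < m \<and> 1 \<le> i \<and> i \<le> n} \<union>
     {{(j, i), (j, i mod n + 1)} | j i. j < m \<and> 1 \<le> i \<and> i \<le> n})"

end

theory Submission
  imports Defs
begin


lemma c3_eq: "cycle_graph 3 = ({0,1,2}, {{0,1},{1,2},{0,2}})"
proof -
  have "{{i, (i + 1) mod 3} | i. i < (3::nat)} = {{0,1},{1,2},{0,2}}"
  proof
    show "{{i, (i + 1) mod 3} | i. i < (3::nat)} \<subseteq> {{0,1},{1,2},{0,2}}"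
    proof
      fix x assume "x \<in> {{i, (i + 1) mod 3} | i. i < (3::nat)}"
      then obtain i where "i < (3::nat)" "x = {i, (i+1) mod 3}" by blast
      moreover have "i = 0 \<or> i = 1 \<or> i = 2" using \<open>i<3\<close> by auto
      ultimately show "x \<in> {{0,1},{1,2},{0,2}}" by auto
    qed
  next
    have a: "(0::nat) < 3 \<and> {0,1} = {0::nat, (0 + 1) mod 3}" by simp
    have b0: "(1 + 1) mod 3 = (2::nat)" by simp
    have b: "(1::nat) < 3 \<and> {1,2} = {1::nat, (1 + 1) mod 3}" unfolding b0 by simp
    have c: "(2::nat) < 3 \<and> {0,2} = {2::nat, (2 + 1) mod 3}" by auto
    show "{{0,1},{1,2},{0,2}} \<subseteq> {{i, (i + 1) mod 3} | i. i < (3::nat)}"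
      using a b c by blast
  qed
  moreover have "{..<(3::nat)} = {0,1,2}" by auto
  ultimately show ?thesis unfolding cycle_graph_def by simp
qed

locale wheelG =
  fixes n m :: nat
  assumes n4: "4 \<le> n"
begin

definition nx :: "nat \<Rightarrow> nat" where "nx i = i mod n + 1"

lemma nx_eq: "1 \<le> i \<Longrightarrow> i \<le> n \<Longrightarrow> nx i = (if i = n then 1 else Suc i)"
proof (cases "i = n")
  case True thus ?thesis unfolding nx_def by simp
next
  case False
  assume "i \<le> n" hence "i < n" using False by simp
  thus ?thesis unfolding nx_def using False by simp
qed

lemma nx_range: "1 \<le> i \<Longrightarrow> i \<le> n \<Longrightarrow> 1 \<le> nx i \<and> nx i \<le> n"
  using n4 by (cases "i = n"; simp add: nx_eq)

lemma nx_ne: "1 \<le> i \<Longrightarrow> i \<le> n \<Longrightarrow> nx i \<noteq> i"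
  using n4 by (cases "i = n"; simp add: nx_eq)

lemma nx_inj: assumes "1 \<le> i" "i \<le> n" "1 \<le> k" "k \<le> n" "nx i = nx k" shows "i = k"
proof -
  have "(if i = n then 1 else Suc i) = (if k = n then 1 else Suc k)"
    using assms(5) unfolding nx_eq[OF assms(1,2)] nx_eq[OF assms(3,4)] .
  thus ?thesis using assms(1-4) n4 by (cases "i = n"; cases "k = n"; simp)
qed

lemma nx2_ne: assumes "1 \<le> i" "i \<le> n" shows "nx (nx i) \<noteq> i"
proof -
  define k where "k = nx i"
  have k: "k = (if i = n then 1 else Suc i)" using nx_eq[OF assms] k_def by simp
  have k1: "1 \<le> k" "k \<le> n" using nx_range[OF assms] k_def by auto
  have "nx k = (if k = n then 1 else Suc k)" using nx_eq[OF k1] .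
  thus ?thesis using k k1 n4 assms unfolding k_def[symmetric] by (cases "i = n"; cases "k = n"; simp)
qed

definition I :: "(nat \<times> nat) set" where "I = {(j,i). j < m \<and> 1 \<le> i \<and> i \<le> n}"

definition spk :: "nat \<times> nat \<Rightarrow> (nat \<times> nat) set" where "spk = (\<lambda>(j,i). {(j,0),(j,i)})"
definition rimE :: "nat \<times> nat \<Rightarrow> (nat \<times> nat) set" where "rimE = (\<lambda>(j,i). {(j,i),(j,nx i)})"

lemma V_eq: "fst (mWheel m n) = {..<m} \<times> {..n}"
  unfolding mWheel_def by auto

lemma E_eq: "snd (mWheel m n) = spk ` I \<union> rimE ` I"
  unfolding mWheel_def spk_def rimE_def I_def nx_def[symmetric] by auto

lemma card_I: "card I = m * n"
proof -
  have "I = {..<m} \<times> {1..n}" unfolding I_def by auto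
  thus ?thesis by simp
qed

lemma finite_I: "finite I"
proof -
  have "I = {..<m} \<times> {1..n}" unfolding I_def by auto
  thus ?thesis by simp
qed

lemma spk_inj: "inj_on spk I"
  unfolding inj_on_def spk_def I_def by (auto simp: doubleton_eq_iff)

lemma rimE_inj: "inj_on rimE I"
proof (rule inj_onI)
  fix x y assume x: "x \<in> I" and y: "y \<in> I" and e: "rimE x = rimE y"
  obtain j i where xi: "x = (j,i)" by force
  obtain j' i' where yi: "y = (j',i')" by force
  from x y have r: "1 \<le> i" "i \<le> n" "1 \<le> i'" "i' \<le> n" unfolding xi yi I_def by auto
  from e have "{(j,i),(j,nx i)} = {(j',i'),(j',nx i')}" unfolding xi yi rimE_def by simp
  hence "(j = j' \<and> i = i' \<and> nx i = nx i') \<or> (j = j' \<and> i = nx i' \<and> nx i = i')"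
    by (auto simp: doubleton_eq_iff)
  thus "x = y" using nx2_ne r unfolding xi yi by auto
qed

lemma spk_rim_disj: "spk ` I \<inter> rimE ` I = {}"
proof -
  { fix x y assume "x \<in> I" "y \<in> I" "spk x = rimE y"
    obtain j i where xi: "x = (j,i)" by force
    obtain j' i' where yi: "y = (j',i')" by force
    have "(j,0) \<in> rimE y" using \<open>spk x = rimE y\<close>[symmetric] unfolding xi spk_def by auto
    hence False using \<open>y \<in> I\<close> nx_range[of i'] unfolding yi rimE_def I_def by auto }
  thus ?thesis by blast
qed

lemma card_E: "card (snd (mWheel m n)) = 2 * m * n"
proof -
  have "card (spk ` I \<union> rimE ` I) = card (spk ` I) + card (rimE ` I)"
    by (rule card_Un_disjoint) (use finite_I spk_rim_disj in auto)
  also have "\<dots> = 2 * m * n" using card_image[OF spk_inj] card_image[OF rimE_inj] card_I by simp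
  finally show ?thesis using E_eq by simp
qed

lemma card_V: "card (fst (mWheel m n)) = m * (n + 1)"
  using V_eq by simp

end



context wheelG begin

definition tri :: "nat \<Rightarrow> nat \<Rightarrow> (nat \<times> nat) graph" where
  "tri j i = ({(j,0),(j,i),(j,nx i)}, {{(j,0),(j,i)},{(j,0),(j,nx i)},{(j,i),(j,nx i)}})"

lemma edge_cases:
  assumes "{a,b} \<in> snd (mWheel m n)"
  shows "a \<noteq> b \<and> fst a = fst b \<and> fst a < m \<and>
    ((snd a = 0 \<and> 1 \<le> snd b \<and> snd b \<le> n) \<or> (snd b = 0 \<and> 1 \<le> snd a \<and> snd a \<le> n) \<or>
     (1 \<le> snd a \<and> snd a \<le> n \<and> 1 \<le> snd b \<and> snd b \<le> n \<and> (snd b = nx (snd a) \<or> snd a = nx (snd b))))"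
proof -
  from assms E_eq obtain z where z: "z \<in> I" and zz: "{a,b} = spk z \<or> {a,b} = rimE z" by auto
  obtain j i where zi: "z = (j,i)" by force
  from z have r: "j < m" "1 \<le> i" "i \<le> n" by (auto simp: I_def zi)
  have ne: "nx i \<noteq> i" using nx_ne r by simp
  have rr: "1 \<le> nx i" "nx i \<le> n" using nx_range r by auto
  from zz show ?thesis
  proof
    assume "{a,b} = spk z"
    hence "{a,b} = {(j,0),(j,i)}" by (simp add: spk_def zi)
    hence "(a = (j,0) \<and> b = (j,i)) \<or> (a = (j,i) \<and> b = (j,0))" by (auto simp: doubleton_eq_iff)
    thus ?thesis using r by auto
  next
    assume "{a,b} = rimE z"
    hence "{a,b} = {(j,i),(j,nx i)}" by (simp add: rimE_def zi)
    hence "(a = (j,i) \<and> b = (j,nx i)) \<or> (a = (j,nx i) \<and> b = (j,i))" by (auto simp: doubleton_eq_iff)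
    thus ?thesis using r ne rr by auto
  qed
qed

lemma edge_doubleton: "e \<in> snd (mWheel m n) \<Longrightarrow> \<exists>a b. e = {a,b} \<and> a \<noteq> b"
proof -
  assume "e \<in> snd (mWheel m n)"
  with E_eq obtain z where z: "z \<in> I" and zz: "e = spk z \<or> e = rimE z" by auto
  obtain j i where zi: "z = (j,i)" by force
  from z have r: "1 \<le> i" "i \<le> n" by (auto simp: I_def zi)
  have ne: "nx i \<noteq> i" using nx_ne r by simp
  from zz show ?thesis
  proof
    assume "e = spk z" thus ?thesis using r by (auto simp: spk_def zi)
  next
    assume "e = rimE z" thus ?thesis using ne by (auto simp: rimE_def zi)
  qed
qed

lemma radj:
  assumes "1 \<le> a" "a \<le> n" "1 \<le> b" "b \<le> n"
  shows "(b = nx a \<or> a = nx b) \<longleftrightarrow> (b = Suc a \<or> a = Suc b \<or> (a = n \<and> b = 1) \<or> (b = n \<and> a = 1))"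
  unfolding nx_eq[OF assms(1,2)] nx_eq[OF assms(3,4)] using assms n4
  by (cases "a = n"; cases "b = n"; simp; blast)

lemma no_rim_tri:
  assumes "1 \<le> p" "p \<le> n" "1 \<le> q" "q \<le> n" "1 \<le> r" "r \<le> n"
    "p \<noteq> q" "q \<noteq> r" "p \<noteq> r"
    "q = nx p \<or> p = nx q" "r = nx q \<or> q = nx r" "r = nx p \<or> p = nx r"
  shows False
proof -
  have a: "q = Suc p \<or> p = Suc q \<or> (p = n \<and> q = 1) \<or> (q = n \<and> p = 1)"
    using assms(10) radj[OF assms(1-4)] by simp
  have b: "r = Suc q \<or> q = Suc r \<or> (q = n \<and> r = 1) \<or> (r = n \<and> q = 1)"
    using assms(11) radj[OF assms(3-6)] by simp
  have c: "r = Suc p \<or> p = Suc r \<or> (p = n \<and> r = 1) \<or> (r = n \<and> p = 1)"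
    using assms(12) radj[OF assms(1,2,5,6)] by simp
  show False using assms(1-9) n4 a b c by (elim disjE conjE; linarith)
qed

lemma tri_form:
  assumes "1 \<le> q" "q \<le> n" "1 \<le> r" "r \<le> n" "r = nx q \<or> q = nx r"
  shows "\<exists>i. 1 \<le> i \<and> i \<le> n \<and>
     ({(j,0),(j,q),(j,r)}, {{(j,0),(j,q)},{(j,q),(j,r)},{(j,0),(j,r)}}) = tri j i"
  using assms(5)
proof
  assume "r = nx q"
  thus ?thesis using assms(1,2) by (intro exI[of _ q]) (auto simp: tri_def)
next
  assume "q = nx r"
  thus ?thesis using assms(3,4) by (intro exI[of _ r]) (auto simp: tri_def)
qed

lemma tri_of_sub:
  assumes "G' \<in> H_subgraphs (cycle_graph 3) (mWheel m n)"
  shows "\<exists>j i. j < m \<and> 1 \<le> i \<and> i \<le> n \<and> G' = tri j i"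
proof -
  from assms have sub: "subgraph G' (mWheel m n)" and iso: "graph_iso (cycle_graph 3) G'"
    by (auto simp: H_subgraphs_def)
  obtain f where f: "bij_betw f (fst (cycle_graph 3)) (fst G') \<and>
      (\<forall>u\<in>fst (cycle_graph 3). \<forall>v\<in>fst (cycle_graph 3). {u, v} \<in> snd (cycle_graph 3) \<longleftrightarrow> {f u, f v} \<in> snd G')"
    using iso[unfolded graph_iso_def] by (rule exE)
  have bij: "bij_betw f {0,1,2} (fst G')" using conjunct1[OF f] unfolding c3_eq fst_conv .
  have adj: "\<forall>u\<in>{0,1,2}. \<forall>v\<in>{0,1,2}. {u,v} \<in> {{0,1},{1,2},{0,2}} \<longleftrightarrow> {f u, f v} \<in> snd G'"
    using conjunct2[OF f] unfolding c3_eq fst_conv snd_conv .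
  define x y w where "x = f 0" and "y = f 1" and "w = f 2"
  have V': "fst G' = {x,y,w}" using bij_betw_imp_surj_on[OF bij] unfolding x_def y_def w_def by simp
  have inj: "inj_on f {0,1,2}" using bij_betw_imp_inj_on[OF bij] .
  have dxy: "x \<noteq> y" using inj_onD[OF inj, of 0 1] unfolding x_def y_def by auto
  have dyw: "y \<noteq> w" using inj_onD[OF inj, of 1 2] unfolding y_def w_def by auto
  have dxw: "x \<noteq> w" using inj_onD[OF inj, of 0 2] unfolding x_def w_def by auto
  have exy: "{x,y} \<in> snd G'" using adj unfolding x_def y_def by auto
  have eyw: "{y,w} \<in> snd G'" using adj unfolding y_def w_def by auto
  have exw: "{x,w} \<in> snd G'" using adj unfolding x_def w_def by auto
  from sub have Esub: "snd G' \<subseteq> snd (mWheel m n)" and Ein: "\<forall>e\<in>snd G'. e \<subseteq> fst G'"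
    by (auto simp: subgraph_def)
  have E': "snd G' = {{x,y},{y,w},{x,w}}"
  proof
    show "snd G' \<subseteq> {{x,y},{y,w},{x,w}}"
    proof
      fix e assume e: "e \<in> snd G'"
      then obtain a b where ab: "e = {a,b}" "a \<noteq> b" using edge_doubleton Esub by blast
      have "a \<in> {x,y,w}" "b \<in> {x,y,w}" using Ein e V' ab by auto
      thus "e \<in> {{x,y},{y,w},{x,w}}" using ab by auto
    qed
  next
    show "{{x,y},{y,w},{x,w}} \<subseteq> snd G'" using exy eyw exw by auto
  qed
  have G'eq: "G' = ({x,y,w}, {{x,y},{y,w},{x,w}})" using V' E' by (metis prod.collapse)
  have cxy: "{x,y} \<in> snd (mWheel m n)" "{y,w} \<in> snd (mWheel m n)" "{x,w} \<in> snd (mWheel m n)"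
    using exy eyw exw Esub by auto
  note ec1 = edge_cases[OF cxy(1)] and ec2 = edge_cases[OF cxy(2)] and ec3 = edge_cases[OF cxy(3)]
  obtain j p where xj: "x = (j,p)" by force
  obtain q where yj: "y = (j,q)" using ec1 xj by (metis prod.collapse fst_conv)
  obtain r where wj: "w = (j,r)" using ec3 xj by (metis prod.collapse fst_conv)
  have jm: "j < m" using ec1 xj by simp
  have pq: "p \<noteq> q" "q \<noteq> r" "p \<noteq> r" using dxy dyw dxw xj yj wj by auto
  note e1 = ec1[unfolded xj yj, simplified] and e2 = ec2[unfolded yj wj, simplified]
    and e3 = ec3[unfolded xj wj, simplified]
  consider (P) "p = 0" | (Q) "q = 0" | (R) "r = 0" | (N) "p \<noteq> 0" "q \<noteq> 0" "r \<noteq> 0" by blast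
  thus ?thesis
  proof cases
    case P
    hence "1 \<le> q" "q \<le> n" "1 \<le> r" "r \<le> n" "r = nx q \<or> q = nx r" using e1 e2 e3 pq by auto
    from tri_form[OF this, of j] obtain i where "1 \<le> i" "i \<le> n"
      "({(j,0),(j,q),(j,r)}, {{(j,0),(j,q)},{(j,q),(j,r)},{(j,0),(j,r)}}) = tri j i" by blast
    thus ?thesis using G'eq xj yj wj P jm by auto
  next
    case Q
    hence "1 \<le> p" "p \<le> n" "1 \<le> r" "r \<le> n" "r = nx p \<or> p = nx r" using e1 e2 e3 pq by auto
    from tri_form[OF this, of j] obtain i where "1 \<le> i" "i \<le> n"
      "({(j,0),(j,p),(j,r)}, {{(j,0),(j,p)},{(j,p),(j,r)},{(j,0),(j,r)}}) = tri j i" by blast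
    moreover have "G' = ({(j,0),(j,p),(j,r)}, {{(j,0),(j,p)},{(j,p),(j,r)},{(j,0),(j,r)}})"
      using G'eq xj yj wj Q by auto
    ultimately show ?thesis using jm by auto
  next
    case R
    hence "1 \<le> p" "p \<le> n" "1 \<le> q" "q \<le> n" "q = nx p \<or> p = nx q" using e1 e2 e3 pq by auto
    from tri_form[OF this, of j] obtain i where "1 \<le> i" "i \<le> n"
      "({(j,0),(j,p),(j,q)}, {{(j,0),(j,p)},{(j,p),(j,q)},{(j,0),(j,q)}}) = tri j i" by blast
    moreover have "G' = ({(j,0),(j,p),(j,q)}, {{(j,0),(j,p)},{(j,p),(j,q)},{(j,0),(j,q)}})"
      using G'eq xj yj wj R by auto
    ultimately show ?thesis using jm by auto
  next
    case N
    have "1 \<le> p" "p \<le> n" "1 \<le> q" "q \<le> n" "1 \<le> r" "r \<le> n"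
      "q = nx p \<or> p = nx q" "r = nx q \<or> q = nx r" "r = nx p \<or> p = nx r"
      using e1 e2 e3 N by auto
    from no_rim_tri[OF this(1-6) pq this(7-9)] show ?thesis ..
  qed
qed

lemma tri_in:
  assumes "j < m" "1 \<le> i" "i \<le> n"
  shows "tri j i \<in> H_subgraphs (cycle_graph 3) (mWheel m n)"
proof -
  have ne: "nx i \<noteq> i" using nx_ne assms by simp
  have rr: "1 \<le> nx i" "nx i \<le> n" using nx_range assms(2,3) by auto
  have sub: "subgraph (tri j i) (mWheel m n)"
  proof -
    have "fst (tri j i) \<subseteq> fst (mWheel m n)" using assms rr by (auto simp: tri_def V_eq)
    moreover have "{(j,0),(j,i)} \<in> snd (mWheel m n)" unfolding E_eq using assms
      by (intro UnI1 image_eqI[of _ _ "(j,i)"]) (auto simp: spk_def I_def)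
    moreover have "{(j,0),(j,nx i)} \<in> snd (mWheel m n)" unfolding E_eq using assms rr
      by (intro UnI1 image_eqI[of _ _ "(j,nx i)"]) (auto simp: spk_def I_def)
    moreover have "{(j,i),(j,nx i)} \<in> snd (mWheel m n)" unfolding E_eq using assms
      by (intro UnI2 image_eqI[of _ _ "(j,i)"]) (auto simp: rimE_def I_def)
    ultimately show ?thesis unfolding subgraph_def tri_def by auto
  qed
  define f :: "nat \<Rightarrow> nat \<times> nat" where "f u = (if u = 0 then (j,0) else if u = 1 then (j,i) else (j,nx i))" for u
  have f0: "f 0 = (j,0)" and f1: "f 1 = (j,i)" and f2: "f 2 = (j, nx i)" by (auto simp: f_def)
  have bij: "bij_betw f {0,1,2} (fst (tri j i))"
    unfolding bij_betw_def inj_on_def tri_def fst_conv using f0 f1 f2 ne assms rr by auto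
  have iso: "\<forall>u\<in>{0,1,2}. \<forall>v\<in>{0,1,2}. {u,v} \<in> {{0::nat,1},{1,2},{0,2}} \<longleftrightarrow> {f u, f v} \<in> snd (tri j i)"
    unfolding tri_def snd_conv using f0 f1 f2 ne assms rr by (auto simp: doubleton_eq_iff)
  have "graph_iso (cycle_graph 3) (tri j i)"
    unfolding graph_iso_def c3_eq fst_conv snd_conv using bij iso by blast
  thus ?thesis using sub by (simp add: H_subgraphs_def)
qed

lemma H_sub_eq: "H_subgraphs (cycle_graph 3) (mWheel m n) = {tri j i | j i. j < m \<and> 1 \<le> i \<and> i \<le> n}"
  using tri_of_sub tri_in by blast

lemma covering: "H_covering (cycle_graph 3) (mWheel m n)"
  unfolding H_covering_def
proof
  fix e assume "e \<in> snd (mWheel m n)"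
  then obtain z where z: "z \<in> I" and zz: "e = spk z \<or> e = rimE z" using E_eq by auto
  obtain j i where zi: "z = (j,i)" by force
  from z have r: "j < m" "1 \<le> i" "i \<le> n" by (auto simp: I_def zi)
  have "e \<in> snd (tri j i)" using zz by (auto simp: tri_def spk_def rimE_def zi)
  thus "\<exists>G'\<in>H_subgraphs (cycle_graph 3) (mWheel m n). e \<in> snd G'" using tri_in[OF r] by blast
qed

end



lemma divmod_eq:
  fixes j j' m a b :: nat
  assumes "j < m" "j' < m" "m * a + j = m * b + j'"
  shows "a = b \<and> j = j'"
proof -
  have m0: "0 < m" using assms(1) by simp
  have "(m * a + j) div m = a" using assms(1) m0 by simp
  moreover have "(m * b + j') div m = b" using assms(2) m0 by simp
  moreover have "(m * a + j) mod m = j" using assms(1) by simp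
  moreover have "(m * b + j') mod m = j'" using assms(2) by simp
  ultimately show ?thesis using assms(3) by metis
qed

locale wheelL = wheelG +
  fixes gc :: nat and g :: "nat \<Rightarrow> nat"
  assumes ev: "even n" and m1: "1 \<le> m" and gc_le: "gc \<le> n"
    and g_le: "\<And>i. 1 \<le> i \<Longrightarrow> i \<le> n \<Longrightarrow> g i \<le> n"
    and g_ne: "\<And>i. 1 \<le> i \<Longrightarrow> i \<le> n \<Longrightarrow> g i \<noteq> gc"
    and g_inj: "\<And>i k. 1 \<le> i \<Longrightarrow> i \<le> n \<Longrightarrow> 1 \<le> k \<Longrightarrow> k \<le> n \<Longrightarrow> g i = g k \<Longrightarrow> i = k"
    and P_ge: "\<And>i. 1 \<le> i \<Longrightarrow> i \<le> n \<Longrightarrow> 1 \<le> g i + g (i mod n + 1)"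
    and P_le: "\<And>i. 1 \<le> i \<Longrightarrow> i \<le> n \<Longrightarrow> g i + g (i mod n + 1) \<le> 2 * n"
    and P_inj: "\<And>i k. 1 \<le> i \<Longrightarrow> i \<le> n \<Longrightarrow> 1 \<le> k \<Longrightarrow> k \<le> n \<Longrightarrow>
        g i + g (i mod n + 1) = g k + g (k mod n + 1) \<Longrightarrow> i = k"
    and P_sum: "\<And>i k. 1 \<le> i \<Longrightarrow> i \<le> n \<Longrightarrow> 1 \<le> k \<Longrightarrow> k \<le> n \<Longrightarrow>
        g i + g (i mod n + 1) + (g k + g (k mod n + 1)) \<noteq> 2 * n + 1"
begin

definition P :: "nat \<Rightarrow> nat" where "P i = g i + g (nx i)"
definition G :: "nat \<Rightarrow> nat" where "G k = (if k = 0 then gc else g k)"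
definition sg :: "nat \<Rightarrow> nat \<Rightarrow> nat" where "sg j k = (if k = 0 \<or> odd k then j else m - 1 - j)"
definition vl :: "nat \<times> nat \<Rightarrow> nat" where "vl v = m * G (snd v) + sg (fst v) (snd v) + 1"
definition Dv :: "nat \<Rightarrow> nat \<Rightarrow> nat" where "Dv j i = m * (P i - 1) + j"
definition NN :: nat where "NN = m * (n + 1)"
definition SL :: "nat \<times> nat \<Rightarrow> nat" where "SL z = NN + 2 * m * n - Dv (fst z) (snd z)"
definition RL :: "nat \<times> nat \<Rightarrow> nat" where "RL z = NN + 1 + Dv (fst z) (nx (snd z))"
definition lam :: "(nat \<times> nat) + (nat \<times> nat) set \<Rightarrow> nat" where
  "lam x = (case x of Inl v \<Rightarrow> vl v
     | Inr e \<Rightarrow> if e \<in> spk ` I then SL (the_inv_into I spk e) else RL (the_inv_into I rimE e))"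

lemma P_ge': "1 \<le> i \<Longrightarrow> i \<le> n \<Longrightarrow> 1 \<le> P i" using P_ge unfolding P_def nx_def by simp
lemma P_le': "1 \<le> i \<Longrightarrow> i \<le> n \<Longrightarrow> P i \<le> 2 * n" using P_le unfolding P_def nx_def by simp
lemma P_inj': "1 \<le> i \<Longrightarrow> i \<le> n \<Longrightarrow> 1 \<le> k \<Longrightarrow> k \<le> n \<Longrightarrow> P i = P k \<Longrightarrow> i = k"
  using P_inj unfolding P_def nx_def by blast
lemma P_sum': "1 \<le> i \<Longrightarrow> i \<le> n \<Longrightarrow> 1 \<le> k \<Longrightarrow> k \<le> n \<Longrightarrow> P i + P k \<noteq> 2 * n + 1"
  using P_sum unfolding P_def nx_def by blast

lemma lam_spk: "z \<in> I \<Longrightarrow> lam (Inr (spk z)) = SL z"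
  unfolding lam_def using the_inv_into_f_f[OF spk_inj] by simp

lemma lam_rim: "z \<in> I \<Longrightarrow> lam (Inr (rimE z)) = RL z"
proof -
  assume z: "z \<in> I"
  have "rimE z \<notin> spk ` I" using spk_rim_disj z by blast
  thus ?thesis unfolding lam_def using the_inv_into_f_f[OF rimE_inj z] by simp
qed

lemma sg_sum: assumes "j < m" "1 \<le> i" "i \<le> n" shows "sg j i + sg j (nx i) = m - 1"
proof (cases "i = n")
  case True
  hence "nx i = 1" using nx_eq assms(2,3) by simp
  thus ?thesis using True ev assms by (simp add: sg_def)
next
  case False
  hence nxi: "nx i = Suc i" using nx_eq assms(2,3) by simp
  show ?thesis
  proof (cases "odd i")
    case True thus ?thesis using assms nxi by (simp add: sg_def)
  next
    case False thus ?thesis using assms nxi by (simp add: sg_def)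
  qed
qed

lemma sg_lt: "j < m \<Longrightarrow> sg j k < m"
  unfolding sg_def by auto

lemma vsum:
  assumes "j < m" "1 \<le> i" "i \<le> n"
  shows "vl (j,0) + vl (j,i) + vl (j,nx i) = m * (gc + 1) + m + 2 + Dv j i"
proof -
  have r: "1 \<le> nx i" "nx i \<le> n" using nx_range assms(2,3) by auto
  have a: "vl (j,0) = m * gc + j + 1" by (simp add: vl_def G_def sg_def)
  have b: "vl (j,i) = m * g i + sg j i + 1" using assms by (simp add: vl_def G_def)
  have c: "vl (j,nx i) = m * g (nx i) + sg j (nx i) + 1" using r by (simp add: vl_def G_def)
  have s: "sg j i + sg j (nx i) = m - 1" using sg_sum assms by simp
  obtain p where p: "P i = Suc p" using P_ge'[OF assms(2,3)] by (cases "P i") auto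
  have "m * (P i - 1) + m = m * (g i + g (nx i))" using p unfolding P_def[symmetric] by simp
  hence "m * g i + m * g (nx i) = m * (P i - 1) + m" by (simp add: distrib_left)
  thus ?thesis using a b c s m1 unfolding Dv_def by simp
qed

lemma Dv_lt: assumes "j < m" "1 \<le> i" "i \<le> n" shows "Dv j i < 2 * m * n"
proof -
  have "P i - 1 + 1 \<le> 2 * n" using P_le'[OF assms(2,3)] P_ge'[OF assms(2,3)] by simp
  hence "m * (P i - 1 + 1) \<le> m * (2 * n)" by (rule mult_le_mono2)
  hence "m * (P i - 1) + m \<le> 2 * m * n" by (simp add: distrib_left)
  thus ?thesis using assms(1) unfolding Dv_def by simp
qed

lemma Dv_inj:
  assumes "j < m" "1 \<le> i" "i \<le> n" "j' < m" "1 \<le> i'" "i' \<le> n" "Dv j i = Dv j' i'"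
  shows "j = j' \<and> i = i'"
proof -
  from divmod_eq[OF assms(1,4) assms(7)[unfolded Dv_def]]
  have "P i - 1 = P i' - 1" "j = j'" by auto
  hence "P i = P i'" using P_ge'[OF assms(2,3)] P_ge'[OF assms(5,6)] by simp
  thus ?thesis using P_inj' assms \<open>j = j'\<close> by blast
qed

lemma Dv_sum:
  assumes "j < m" "1 \<le> i" "i \<le> n" "j' < m" "1 \<le> i'" "i' \<le> n"
  shows "Dv j i + Dv j' i' + 1 \<noteq> 2 * m * n"
proof
  assume eq: "Dv j i + Dv j' i' + 1 = 2 * m * n"
  define A where "A = (P i - 1) + (P i' - 1)"
  have eq2: "m * A + j + j' + 1 = m * (2 * n)" using eq unfolding Dv_def A_def by (simp add: distrib_left)
  have "A = 2 * n - 1"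
  proof (rule ccontr)
    assume ne: "A \<noteq> 2 * n - 1"
    show False
    proof (cases "A < 2 * n - 1")
      case True
      hence "A + 2 \<le> 2 * n" by simp
      hence "m * (A + 2) \<le> m * (2 * n)" by (rule mult_le_mono2)
      hence "m * A + 2 * m \<le> m * (2 * n)" by (simp add: distrib_left)
      thus False using eq2 assms(1,4) by linarith
    next
      case False
      hence "2 * n \<le> A" using ne by simp
      hence "m * (2 * n) \<le> m * A" by (rule mult_le_mono2)
      thus False using eq2 by linarith
    qed
  qed
  hence "P i + P i' = 2 * n + 1" using P_ge'[OF assms(2,3)] P_ge'[OF assms(5,6)] n4 unfolding A_def by simp
  thus False using P_sum' assms by blast
qed

lemma vl_range: assumes "v \<in> fst (mWheel m n)" shows "1 \<le> vl v \<and> vl v \<le> NN"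
proof -
  obtain j k where v: "v = (j,k)" by force
  have r: "j < m" "k \<le> n" using assms v V_eq by auto
  have "G k \<le> n" using r gc_le g_le[of k] by (cases "k = 0") (auto simp: G_def)
  hence "m * G k \<le> m * n" by (rule mult_le_mono2)
  moreover have "sg j k < m" using sg_lt r by simp
  moreover have "vl v = m * G k + sg j k + 1" unfolding vl_def v by simp
  moreover have "NN = m * n + m" unfolding NN_def by simp
  ultimately show ?thesis by linarith
qed

lemma G_inj: assumes "k \<le> n" "k' \<le> n" "G k = G k'" shows "k = k'"
proof (cases "k = 0")
  case True
  show ?thesis
  proof (rule ccontr)
    assume "k \<noteq> k'"
    hence "1 \<le> k'" using True by simp
    thus False using assms True g_ne[of k'] by (auto simp: G_def)
  qed
next
  case False
  show ?thesis
  proof (cases "k' = 0")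
    case True thus ?thesis using assms False g_ne[of k] by (auto simp: G_def)
  next
    case False2: False
    thus ?thesis using False assms g_inj[of k k'] by (auto simp: G_def)
  qed
qed

lemma vl_inj: "inj_on vl (fst (mWheel m n))"
proof (rule inj_onI)
  fix v v' assume v: "v \<in> fst (mWheel m n)" and v': "v' \<in> fst (mWheel m n)" and e: "vl v = vl v'"
  obtain j k where vv: "v = (j,k)" by force
  obtain j' k' where vv': "v' = (j',k')" by force
  have r: "j < m" "k \<le> n" "j' < m" "k' \<le> n" using v v' vv vv' V_eq by auto
  have "m * G k + sg j k = m * G k' + sg j' k'" using e unfolding vl_def vv vv' by simp
  from divmod_eq[OF sg_lt[OF r(1)] sg_lt[OF r(3)] this]
  have "G k = G k'" "sg j k = sg j' k'" by auto
  hence kk: "k = k'" using G_inj r by blast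
  have "j = j'" using \<open>sg j k = sg j' k'\<close> r unfolding kk sg_def by (auto split: if_splits)
  thus "v = v'" using kk vv vv' by simp
qed

lemma lab_E: assumes "e \<in> snd (mWheel m n)"
  shows "NN + 1 \<le> lam (Inr e) \<and> lam (Inr e) \<le> NN + 2 * m * n"
proof -
  from assms E_eq obtain z where z: "z \<in> I" and zz: "e = spk z \<or> e = rimE z" by auto
  obtain j i where zi: "z = (j,i)" by force
  from z have r: "j < m" "1 \<le> i" "i \<le> n" by (auto simp: I_def zi)
  have rr: "1 \<le> nx i" "nx i \<le> n" using nx_range r(2,3) by auto
  from zz show ?thesis
  proof
    assume "e = spk z"
    thus ?thesis using lam_spk[OF z] Dv_lt[OF r] unfolding SL_def zi by simp
  next
    assume "e = rimE z"
    thus ?thesis using lam_rim[OF z] Dv_lt[OF r(1) rr] unfolding RL_def zi by simp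
  qed
qed

end



context wheelL begin

lemma weight_tri:
  assumes "j < m" "1 \<le> i" "i \<le> n"
  shows "weight lam (tri j i) = m * (gc + 1) + m + 2 + 3 * NN + 4 * m * n + 1"
proof -
  have rr: "1 \<le> nx i" "nx i \<le> n" using nx_range assms(2,3) by auto
  have ne: "nx i \<noteq> i" using nx_ne assms(2,3) by simp
  have zI: "(j,i) \<in> I" and zI': "(j, nx i) \<in> I" using assms rr by (auto simp: I_def)
  have vs: "(\<Sum>v\<in>fst (tri j i). lam (Inl v)) = vl (j,0) + vl (j,i) + vl (j,nx i)"
  proof -
    have "fst (tri j i) = {(j,0),(j,i),(j,nx i)}" by (simp add: tri_def)
    moreover have "(j,0) \<noteq> (j,i)" "(j,0) \<noteq> (j,nx i)" "(j,i) \<noteq> (j,nx i)" using assms rr ne by auto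
    ultimately show ?thesis by (simp add: lam_def)
  qed
  have es: "(\<Sum>e\<in>snd (tri j i). lam (Inr e)) = SL (j,i) + SL (j,nx i) + RL (j,i)"
  proof -
    have "snd (tri j i) = {spk (j,i), spk (j,nx i), rimE (j,i)}" by (simp add: tri_def spk_def rimE_def)
    moreover have "spk (j,i) \<noteq> spk (j,nx i)" using inj_onD[OF spk_inj _ zI zI'] ne by auto
    moreover have "spk (j,i) \<noteq> rimE (j,i)" "spk (j,nx i) \<noteq> rimE (j,i)"
      using spk_rim_disj zI zI' by blast+
    ultimately show ?thesis using lam_spk[OF zI] lam_spk[OF zI'] lam_rim[OF zI] by simp
  qed
  have d1: "Dv j i < 2 * m * n" using Dv_lt assms by simp
  have d2: "Dv j (nx i) < 2 * m * n" using Dv_lt assms(1) rr by simp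
  show ?thesis unfolding weight_def vs es vsum[OF assms] SL_def RL_def fst_conv snd_conv
    using d1 d2 by simp
qed

lemma lam_inj: "inj_on lam (Inl ` fst (mWheel m n) \<union> Inr ` snd (mWheel m n))"
proof (rule inj_onI)
  fix x y assume x: "x \<in> Inl ` fst (mWheel m n) \<union> Inr ` snd (mWheel m n)"
    and y: "y \<in> Inl ` fst (mWheel m n) \<union> Inr ` snd (mWheel m n)" and e: "lam x = lam y"
  have EE: "\<And>e e'. e \<in> snd (mWheel m n) \<Longrightarrow> e' \<in> snd (mWheel m n) \<Longrightarrow> lam (Inr e) = lam (Inr e') \<Longrightarrow> e = e'"
  proof -
    fix e e' assume e1: "e \<in> snd (mWheel m n)" and e2: "e' \<in> snd (mWheel m n)" and ee: "lam (Inr e) = lam (Inr e')"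
    from e1 E_eq obtain z where z: "z \<in> I" and zz: "e = spk z \<or> e = rimE z" by auto
    from e2 E_eq obtain z' where z': "z' \<in> I" and zz': "e' = spk z' \<or> e' = rimE z'" by auto
    obtain j i where zi: "z = (j,i)" by force
    obtain j' i' where zi': "z' = (j',i')" by force
    from z have r: "j < m" "1 \<le> i" "i \<le> n" by (auto simp: I_def zi)
    from z' have r': "j' < m" "1 \<le> i'" "i' \<le> n" by (auto simp: I_def zi')
    have rr: "1 \<le> nx i" "nx i \<le> n" using nx_range r(2,3) by auto
    have rr': "1 \<le> nx i'" "nx i' \<le> n" using nx_range r'(2,3) by auto
    have d1: "Dv j i < 2 * m * n" "Dv j (nx i) < 2 * m * n" using Dv_lt r rr by auto
    have d2: "Dv j' i' < 2 * m * n" "Dv j' (nx i') < 2 * m * n" using Dv_lt r' rr' by auto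
    show "e = e'"
    proof (cases "e = spk z")
      case True
      show ?thesis
      proof (cases "e' = spk z'")
        case True2: True
        have "SL z = SL z'" using ee lam_spk[OF z] lam_spk[OF z'] True True2 by simp
        hence "Dv j i = Dv j' i'" using d1 d2 unfolding SL_def zi zi' by simp
        hence "z = z'" using Dv_inj r r' zi zi' by simp
        thus ?thesis using True True2 by simp
      next
        case False2: False
        hence e': "e' = rimE z'" using zz' by simp
        have "SL z = RL z'" using ee lam_spk[OF z] lam_rim[OF z'] True e' by simp
        hence "Dv j i + Dv j' (nx i') + 1 = 2 * m * n" using d1 d2 unfolding SL_def RL_def zi zi' by simp
        thus ?thesis using Dv_sum[OF r(1-3) r'(1) rr'] by simp
      qed
    next
      case False
      hence e: "e = rimE z" using zz by simp
      show ?thesis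
      proof (cases "e' = spk z'")
        case True2: True
        have "RL z = SL z'" using ee lam_spk[OF z'] lam_rim[OF z] e True2 by simp
        hence "Dv j' i' + Dv j (nx i) + 1 = 2 * m * n" using d1 d2 unfolding SL_def RL_def zi zi' by simp
        thus ?thesis using Dv_sum[OF r'(1-3) r(1) rr] by simp
      next
        case False2: False
        hence e': "e' = rimE z'" using zz' by simp
        have "RL z = RL z'" using ee lam_rim[OF z] lam_rim[OF z'] e e' by simp
        hence "Dv j (nx i) = Dv j' (nx i')" unfolding RL_def zi zi' by simp
        hence "j = j' \<and> nx i = nx i'" using Dv_inj r rr r' rr' by blast
        hence "z = z'" using nx_inj r r' zi zi' by blast
        thus ?thesis using e e' by simp
      qed
    qed
  qed
  show "x = y"
  proof (cases x)
    case (Inl v)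
    hence v: "v \<in> fst (mWheel m n)" using x by auto
    show ?thesis
    proof (cases y)
      case (Inl v')
      hence v': "v' \<in> fst (mWheel m n)" using y by auto
      have "vl v = vl v'" using e Inl \<open>y = Inl v'\<close> \<open>x = Inl v\<close> by (simp add: lam_def)
      thus ?thesis using inj_onD[OF vl_inj _ v v'] Inl \<open>y = Inl v'\<close> \<open>x = Inl v\<close> by simp
    next
      case (Inr e')
      hence e': "e' \<in> snd (mWheel m n)" using y by auto
      have "lam x \<le> NN" using vl_range[OF v] Inl by (simp add: lam_def)
      moreover have "NN + 1 \<le> lam y" using lab_E[OF e'] Inr by simp
      ultimately show ?thesis using e by simp
    qed
  next
    case (Inr e1)
    hence e1: "e1 \<in> snd (mWheel m n)" using x by auto
    show ?thesis
    proof (cases y)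
      case (Inl v')
      hence v': "v' \<in> fst (mWheel m n)" using y by auto
      have "lam y \<le> NN" using vl_range[OF v'] Inl by (simp add: lam_def)
      moreover have "NN + 1 \<le> lam x" using lab_E[OF e1] Inr by simp
      ultimately show ?thesis using e by simp
    next
      case (Inr e2)
      hence e2: "e2 \<in> snd (mWheel m n)" using y by auto
      show ?thesis using EE[OF e1 e2] e \<open>x = Inr e1\<close> \<open>y = Inr e2\<close> by simp
    qed
  qed
qed

lemma finV: "finite (fst (mWheel m n))" using V_eq by simp
lemma finE: "finite (snd (mWheel m n))" using E_eq finite_I by simp

lemma lam_bij: "bij_betw lam (Inl ` fst (mWheel m n) \<union> Inr ` snd (mWheel m n))
    {1 .. card (fst (mWheel m n)) + card (snd (mWheel m n))}"
proof -
  let ?D = "Inl ` fst (mWheel m n) \<union> Inr ` snd (mWheel m n)"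
  have cd: "card (fst (mWheel m n)) + card (snd (mWheel m n)) = NN + 2 * m * n"
    using card_V card_E unfolding NN_def by simp
  have sub: "lam ` ?D \<subseteq> {1 .. NN + 2 * m * n}"
  proof
    fix y assume "y \<in> lam ` ?D"
    then obtain x where x: "x \<in> ?D" "y = lam x" by blast
    show "y \<in> {1 .. NN + 2 * m * n}"
    proof (cases x)
      case (Inl v)
      hence "v \<in> fst (mWheel m n)" using x by auto
      from vl_range[OF this] have "1 \<le> vl v" "vl v \<le> NN" by auto
      moreover have "y = vl v" using x Inl by (simp add: lam_def)
      ultimately show ?thesis by simp
    next
      case (Inr e)
      hence "e \<in> snd (mWheel m n)" using x by auto
      thus ?thesis using lab_E x Inr by fastforce
    qed
  qed
  have "card ?D = card (Inl ` fst (mWheel m n) :: ((nat\<times>nat) + (nat\<times>nat) set) set) + card (Inr ` snd (mWheel m n) :: ((nat\<times>nat) + (nat\<times>nat) set) set)"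
    by (rule card_Un_disjoint) (use finV finE in auto)
  also have "\<dots> = card (fst (mWheel m n)) + card (snd (mWheel m n))"
    by (simp add: card_image)
  finally have "card (lam ` ?D) = NN + 2 * m * n" using card_image[OF lam_inj] cd by simp
  hence "lam ` ?D = {1 .. NN + 2 * m * n}" using sub by (intro card_subset_eq) auto
  thus ?thesis unfolding bij_betw_def cd using lam_inj by simp
qed

lemma lam_V: "lam ` Inl ` fst (mWheel m n) = {1 .. card (fst (mWheel m n))}"
proof -
  have eq: "lam ` Inl ` fst (mWheel m n) = vl ` fst (mWheel m n)" by (force simp: lam_def)
  have sub: "vl ` fst (mWheel m n) \<subseteq> {1 .. NN}" using vl_range by auto
  have "card (vl ` fst (mWheel m n)) = NN" using card_image[OF vl_inj] card_V unfolding NN_def by simp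
  hence "vl ` fst (mWheel m n) = {1 .. NN}" using sub by (intro card_subset_eq) auto
  thus ?thesis using eq card_V unfolding NN_def by simp
qed

theorem supermagic: "H_supermagic (cycle_graph 3) (mWheel m n)"
proof -
  have "\<forall>G'\<in>H_subgraphs (cycle_graph 3) (mWheel m n). weight lam G' = m * (gc + 1) + m + 2 + 3 * NN + 4 * m * n + 1"
    using tri_of_sub weight_tri by blast
  hence "H_magic_labeling (cycle_graph 3) (mWheel m n) lam"
    unfolding H_magic_labeling_def using lam_bij by blast
  hence "H_supermagic_labeling (cycle_graph 3) (mWheel m n) lam"
    unfolding H_supermagic_labeling_def using lam_V by blast
  thus ?thesis unfolding H_supermagic_def using covering by blast
qed

end



lemma nx2h: "1 \<le> i \<Longrightarrow> i \<le> n \<Longrightarrow> i mod n + 1 = (if i = n then 1 else Suc i)"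
proof (cases "i = n")
  case True thus ?thesis by simp
next
  case False
  assume "i \<le> n" hence "i < n" using False by simp
  thus ?thesis using False by simp
qed

definition gA :: "nat \<Rightarrow> nat \<Rightarrow> nat" where
  "gA h i = (if i \<le> h then i - 1 else if even i then i - 1 else i + 1)"

lemma gA_char:
  assumes "1 \<le> i"
  shows "(i \<le> h \<and> gA h i + 1 = i) \<or> (h < i \<and> even i \<and> gA h i + 1 = i) \<or> (h < i \<and> odd i \<and> gA h i = i + 1)"
  using assms by (cases "i \<le> h"; cases "even i"; simp add: gA_def)

lemma PA_char:
  assumes "even h" "2 \<le> h" "1 \<le> i" "i \<le> 2 * h"
  shows "(i < h \<and> gA h i + gA h (i mod (2*h) + 1) + 1 = 2 * i) \<or>
         (h \<le> i \<and> i < 2 * h \<and> gA h i + gA h (i mod (2*h) + 1) = 2 * i + 1) \<or>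
         (i = 2 * h \<and> gA h i + gA h (i mod (2*h) + 1) + 1 = 2 * h)"
proof (cases "i = 2 * h")
  case True
  hence nx: "i mod (2*h) + 1 = 1" by simp
  have "gA h 1 = 0" using assms by (simp add: gA_def)
  moreover have "gA h i = 2 * h - 1" using True assms by (simp add: gA_def)
  ultimately show ?thesis using nx True assms by simp
next
  case False
  hence nx: "i mod (2*h) + 1 = Suc i" using nx2h[of i "2*h"] assms by simp
  consider (a) "i < h" | (b) "i = h" | (c) "h < i" "even i" | (d) "h < i" "odd i" by force
  thus ?thesis
  proof cases
    case a
    hence "gA h i = i - 1" "gA h (Suc i) = i" by (auto simp: gA_def)
    thus ?thesis using a nx assms by simp
  next
    case b
    hence "gA h i = i - 1" "gA h (Suc i) = i + 2" using assms by (auto simp: gA_def)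
    thus ?thesis using b nx assms False by simp
  next
    case c
    hence "gA h i = i - 1" "gA h (Suc i) = i + 2" using assms by (auto simp: gA_def)
    thus ?thesis using c nx assms False by simp
  next
    case d
    hence "gA h i = i + 1" "gA h (Suc i) = i" using assms by (auto simp: gA_def)
    thus ?thesis using d nx assms False by simp
  qed
qed


abbreviation (input) chA :: "nat \<Rightarrow> nat \<Rightarrow> nat \<Rightarrow> bool" where
  "chA h i x \<equiv> (i \<le> h \<and> x + 1 = i) \<or> (h < i \<and> even i \<and> x + 1 = i) \<or> (h < i \<and> odd i \<and> x = i + 1)"

lemma A_le: fixes i x h :: nat assumes "chA h i x" "i \<le> 2 * h" shows "x \<le> 2 * h"
  using assms by (elim disjE conjE; (linarith | presburger))
lemma A_ne: fixes i x h :: nat assumes "chA h i x" "even h" shows "x \<noteq> h"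
  using assms by (elim disjE conjE; (linarith | presburger))
lemma A_inj: fixes i k x y h :: nat assumes "chA h i x" "chA h k y" "x = y" shows "i = k"
  using assms by (elim disjE conjE; (linarith | presburger))

abbreviation (input) cPA :: "nat \<Rightarrow> nat \<Rightarrow> nat \<Rightarrow> bool" where
  "cPA h i a \<equiv> (i < h \<and> a + 1 = 2 * i) \<or> (h \<le> i \<and> i < 2 * h \<and> a = 2 * i + 1) \<or> (i = 2 * h \<and> a + 1 = 2 * h)"

lemma PA_ge: fixes i a h :: nat assumes "cPA h i a" "1 \<le> i" "2 \<le> h" shows "1 \<le> a"
  using assms by (elim disjE conjE; linarith)
lemma PA_le: fixes i a h :: nat assumes "cPA h i a" shows "a \<le> 2 * (2 * h)"
  using assms by (elim disjE conjE; linarith)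
lemma PA_inj: fixes i k a b h :: nat assumes "cPA h i a" "cPA h k b" "a = b" shows "i = k"
  using assms by (elim disjE conjE; linarith)
lemma PA_odd: fixes i a h :: nat assumes "cPA h i a" shows "odd a"
proof -
  have "a + 1 = 2 * i \<or> a = 2 * i + 1 \<or> a + 1 = 2 * h" using assms by blast
  thus ?thesis by (elim disjE; presburger)
qed
lemma PA_sum: fixes i k a b h :: nat assumes "cPA h i a" "cPA h k b" shows "a + b \<noteq> 2 * (2 * h) + 1"
proof -
  have "odd a" "odd b" using PA_odd assms by blast+
  thus ?thesis by presburger
qed

lemma instA:
  assumes "even h" "2 \<le> h" "1 \<le> m"
  shows "wheelL (2 * h) m h (gA h)"
proof (unfold_locales)
  show "4 \<le> 2 * h" using assms by simp
  show "even (2 * h)" by simp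
  show "1 \<le> m" by fact
  show "h \<le> 2 * h" by simp
next
  fix i assume i: "1 \<le> i" "i \<le> 2 * h"
  show "gA h i \<le> 2 * h" using A_le[OF gA_char[OF i(1)] i(2)] .
next
  fix i assume i: "1 \<le> i" "i \<le> 2 * h"
  show "gA h i \<noteq> h" using A_ne[OF gA_char[OF i(1)] assms(1)] .
next
  fix i k assume i: "1 \<le> i" "i \<le> 2 * h" "1 \<le> k" "k \<le> 2 * h" "gA h i = gA h k"
  show "i = k" using A_inj[OF gA_char[OF i(1)] gA_char[OF i(3)] i(5)] .
next
  fix i assume i: "1 \<le> i" "i \<le> 2 * h"
  show "1 \<le> gA h i + gA h (i mod (2 * h) + 1)" using PA_ge[OF PA_char[OF assms(1,2) i] i(1) assms(2)] .
next
  fix i assume i: "1 \<le> i" "i \<le> 2 * h"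
  show "gA h i + gA h (i mod (2 * h) + 1) \<le> 2 * (2 * h)" using PA_le[OF PA_char[OF assms(1,2) i]] .
next
  fix i k assume i: "1 \<le> i" "i \<le> 2 * h" "1 \<le> k" "k \<le> 2 * h"
    and e: "gA h i + gA h (i mod (2 * h) + 1) = gA h k + gA h (k mod (2 * h) + 1)"
  show "i = k" using PA_inj[OF PA_char[OF assms(1,2) i(1,2)] PA_char[OF assms(1,2) i(3,4)] e] .
next
  fix i k assume i: "1 \<le> i" "i \<le> 2 * h" "1 \<le> k" "k \<le> 2 * h"
  show "gA h i + gA h (i mod (2 * h) + 1) + (gA h k + gA h (k mod (2 * h) + 1)) \<noteq> 2 * (2 * h) + 1"
    using PA_sum[OF PA_char[OF assms(1,2) i(1,2)] PA_char[OF assms(1,2) i(3,4)]] .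
qed




definition gB :: "nat \<Rightarrow> nat \<Rightarrow> nat" where
  "gB h i = (if i < h then i - 1 else if i \<le> h + 1 then i else if odd i then i + 1 else i - 1)"

abbreviation (input) chB :: "nat \<Rightarrow> nat \<Rightarrow> nat \<Rightarrow> bool" where
  "chB h i x \<equiv> (i < h \<and> x + 1 = i) \<or> ((i = h \<or> i = h + 1) \<and> x = i) \<or>
     (h + 1 < i \<and> odd i \<and> x = i + 1) \<or> (h + 1 < i \<and> even i \<and> x + 1 = i)"

lemma gB_char:
  assumes "1 \<le> i"
  shows "chB h i (gB h i)"
  using assms by (cases "i < h"; cases "i \<le> h + 1"; cases "odd i"; simp add: gB_def; linarith)

lemma B_le: fixes i x h :: nat assumes "chB h i x" "i \<le> 2 * h" "3 \<le> h" shows "x \<le> 2 * h"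
  using assms by (elim disjE conjE; (linarith | presburger))
lemma B_ne: fixes i x h :: nat assumes "chB h i x" "3 \<le> h" shows "x \<noteq> h - 1"
  using assms by (elim disjE conjE; linarith)
lemma B_inj: fixes i k x y h :: nat assumes "chB h i x" "chB h k y" "x = y" "odd h" shows "i = k"
  using assms by (elim disjE conjE; (linarith | presburger))

abbreviation (input) cPB :: "nat \<Rightarrow> nat \<Rightarrow> nat \<Rightarrow> bool" where
  "cPB h i a \<equiv> (i + 2 \<le> h \<and> a + 1 = 2 * i) \<or> (i + 1 = h \<and> a + 2 = 2 * h) \<or> (i = h \<and> a = 2 * h + 1) \<or>
     (i = h + 1 \<and> a = 2 * h + 4) \<or> (h + 2 \<le> i \<and> i < 2 * h \<and> a = 2 * i + 1) \<or> (i = 2 * h \<and> a + 1 = 2 * h)"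

lemma PB_char:
  assumes "odd h" "3 \<le> h" "1 \<le> i" "i \<le> 2 * h"
  shows "cPB h i (gB h i + gB h (i mod (2*h) + 1))"
proof (cases "i = 2 * h")
  case True
  hence nx: "i mod (2*h) + 1 = 1" by simp
  have "gB h 1 = 0" using assms by (simp add: gB_def)
  moreover have "gB h i = 2 * h - 1" using True assms by (simp add: gB_def)
  ultimately show ?thesis using nx True assms by simp
next
  case False
  hence nx: "i mod (2*h) + 1 = Suc i" using nx2h[of i "2*h"] assms by simp
  consider (a) "i + 2 \<le> h" | (b) "i + 1 = h" | (c) "i = h" | (d) "i = h + 1"
    | (e) "h + 2 \<le> i" "odd i" | (f) "h + 2 \<le> i" "even i" by linarith
  thus ?thesis
  proof cases
    case a
    hence "gB h i = i - 1" "gB h (Suc i) = i" by (auto simp: gB_def)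
    thus ?thesis using a nx assms by simp
  next
    case b
    hence "gB h i = i - 1" "gB h (Suc i) = h" using assms by (auto simp: gB_def)
    thus ?thesis using b nx assms by simp
  next
    case c
    hence "gB h i = h" "gB h (Suc i) = h + 1" using assms by (auto simp: gB_def)
    thus ?thesis using c nx assms by simp
  next
    case d
    hence "gB h i = h + 1" "gB h (Suc i) = h + 3" using assms by (auto simp: gB_def)
    thus ?thesis using d nx assms by simp
  next
    case e
    hence "gB h i = i + 1" "gB h (Suc i) = i" using assms by (auto simp: gB_def)
    thus ?thesis using e nx assms False by simp
  next
    case f
    hence "gB h i = i - 1" "gB h (Suc i) = i + 2" using assms by (auto simp: gB_def)
    thus ?thesis using f nx assms False by simp
  qed
qed

lemma PB_ge: fixes i a h :: nat assumes "cPB h i a" "1 \<le> i" "3 \<le> h" shows "1 \<le> a"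
  using assms by (elim disjE conjE; linarith)
lemma PB_le: fixes i a h :: nat assumes "cPB h i a" "3 \<le> h" shows "a \<le> 2 * (2 * h)"
  using assms by (elim disjE conjE; linarith)
lemma PB_inj: fixes i k a b h :: nat assumes "cPB h i a" "cPB h k b" "a = b" shows "i = k"
  using assms by (elim disjE conjE; linarith)
lemma PB_prop: fixes i a h :: nat assumes "cPB h i a"
  shows "(odd a \<or> a + 2 = 2 * h \<or> a = 2 * h + 4) \<and> a \<noteq> 2 * h + 3 \<and> a + 3 \<noteq> 2 * h"
  using assms by (elim disjE conjE; presburger)
lemma PB_sum: fixes i k a b h :: nat assumes "cPB h i a" "cPB h k b" shows "a + b \<noteq> 2 * (2 * h) + 1"
proof -
  have A: "(odd a \<or> a + 2 = 2 * h \<or> a = 2 * h + 4) \<and> a \<noteq> 2 * h + 3 \<and> a + 3 \<noteq> 2 * h"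
    using PB_prop[OF assms(1)] .
  have B: "(odd b \<or> b + 2 = 2 * h \<or> b = 2 * h + 4) \<and> b \<noteq> 2 * h + 3 \<and> b + 3 \<noteq> 2 * h"
    using PB_prop[OF assms(2)] .
  show ?thesis using A B by (elim disjE conjE; presburger)
qed

lemma instB:
  assumes "odd h" "3 \<le> h" "1 \<le> m"
  shows "wheelL (2 * h) m (h - 1) (gB h)"
proof (unfold_locales)
  show "4 \<le> 2 * h" using assms by simp
  show "even (2 * h)" by simp
  show "1 \<le> m" by fact
  show "h - 1 \<le> 2 * h" by simp
next
  fix i assume i: "1 \<le> i" "i \<le> 2 * h"
  show "gB h i \<le> 2 * h" using B_le[OF gB_char[OF i(1)] i(2) assms(2)] .
next
  fix i assume i: "1 \<le> i" "i \<le> 2 * h"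
  show "gB h i \<noteq> h - 1" using B_ne[OF gB_char[OF i(1)] assms(2)] .
next
  fix i k assume i: "1 \<le> i" "i \<le> 2 * h" "1 \<le> k" "k \<le> 2 * h" "gB h i = gB h k"
  show "i = k" using B_inj[OF gB_char[OF i(1)] gB_char[OF i(3)] i(5) assms(1)] .
next
  fix i assume i: "1 \<le> i" "i \<le> 2 * h"
  show "1 \<le> gB h i + gB h (i mod (2 * h) + 1)" using PB_ge[OF PB_char[OF assms(1,2) i] i(1) assms(2)] .
next
  fix i assume i: "1 \<le> i" "i \<le> 2 * h"
  show "gB h i + gB h (i mod (2 * h) + 1) \<le> 2 * (2 * h)" using PB_le[OF PB_char[OF assms(1,2) i] assms(2)] .
next
  fix i k assume i: "1 \<le> i" "i \<le> 2 * h" "1 \<le> k" "k \<le> 2 * h"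
    and e: "gB h i + gB h (i mod (2 * h) + 1) = gB h k + gB h (k mod (2 * h) + 1)"
  show "i = k" using PB_inj[OF PB_char[OF assms(1,2) i(1,2)] PB_char[OF assms(1,2) i(3,4)] e] .
next
  fix i k assume i: "1 \<le> i" "i \<le> 2 * h" "1 \<le> k" "k \<le> 2 * h"
  show "gB h i + gB h (i mod (2 * h) + 1) + (gB h k + gB h (k mod (2 * h) + 1)) \<noteq> 2 * (2 * h) + 1"
    using PB_sum[OF PB_char[OF assms(1,2) i(1,2)] PB_char[OF assms(1,2) i(3,4)]] .
qed

theorem theorem6:
  fixes n m :: nat
  assumes "even n" and "n \<ge> 4" and "m \<ge> 2"
  shows "H_supermagic (cycle_graph 3) (mWheel m n)"
proof -
  obtain h where n: "n = 2 * h" using assms(1) by (elim evenE)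
  have h2: "2 \<le> h" using assms(2) n by simp
  have m1: "1 \<le> m" using assms(3) by simp
  show ?thesis
  proof (cases "even h")
    case True
    show ?thesis using wheelL.supermagic[OF instA[OF True h2 m1]] n by simp
  next
    case False
    hence h3: "3 \<le> h" using h2 by presburger
    show ?thesis using wheelL.supermagic[OF instB[OF False h3 m1]] n by simp
  qed
qed


end
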